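(* Let $r,\alpha\in\mathbb R$, $\sigma\in\mathbb R\setminus\{0\}$, let $X$ be the geometric Brownian motion $dX(t)=\alpha X(t)dt+\sigma X(t)dW(t)$, and let $g:]0,\infty[\to[0,+\infty]$ be Borel measurable with $\int_0^\infty g(x)\,dx\in]0,\infty]$. Let $d_1,d_2\in\mathbb C$ be the two roots of $P(d)=\frac{\sigma^2}{2}d^2+(\alpha-\frac{\sigma^2}{2})d-r$. If $d_1=d_2$, or $d_1=\overline{d_2}\in\mathbb C\setminus\mathbb R$, then $$E_x\left[\int_0^\infty e^{-rt}g(X(t))\,dt\right]=\infty$$ for every $x>0$.
   Context: $W$ is a standard Brownian motion and $E_x$ denotes expectation given $X(0)=x$. *)

theory Defs
  imports "HOL-Probability.Probability"
begin

definition brownian_motion :: "'a measure \<Rightarrow> (real \<Rightarrow> 'a \<Rightarrow> real) \<Rightarrow> bool" where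
  "brownian_motion M W \<longleftrightarrow>
     prob_space M \<and>
     (\<forall>t\<ge>0. W t \<in> borel_measurable M) \<and>
     (\<forall>\<omega>\<in>space M. W 0 \<omega> = 0) \<and>
     (\<forall>\<omega>\<in>space M. continuous_on {0..} (\<lambda>t. W t \<omega>)) \<and>
     (\<forall>s t. 0 \<le> s \<and> s < t \<longrightarrow>
        distributed M lborel (\<lambda>\<omega>. W t \<omega> - W s \<omega>) (normal_density 0 (sqrt (t - s)))) \<and>
     (\<forall>ts::real list. sorted_wrt (<) ts \<and> (\<forall>t\<in>set ts. 0 \<le> t) \<longrightarrow>
        prob_space.indep_vars M (\<lambda>_. borel)
          (\<lambda>i \<omega>. W (ts ! Suc i) \<omega> - W (ts ! i) \<omega>) {..<length ts - 1})"

text \<open>The (unique strong) solution of dX = alpha X dt + sigma X dW with X(0) = x.\<close>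
definition gbm :: "real \<Rightarrow> real \<Rightarrow> real \<Rightarrow> (real \<Rightarrow> 'a \<Rightarrow> real) \<Rightarrow> real \<Rightarrow> 'a \<Rightarrow> real" where
  "gbm \<alpha> \<sigma> x W t \<omega> = x * exp ((\<alpha> - \<sigma>\<^sup>2 / 2) * t + \<sigma> * W t \<omega>)"

end

theory Submission
  imports Defs
begin

lemma disc_le:
  fixes s m r :: real and d1 d2 :: complex
  assumes s: "s > 0"
    and roots: "\<forall>d::complex. complex_of_real s * d\<^sup>2 + complex_of_real m * d
                   - complex_of_real r = complex_of_real s * (d - d1) * (d - d2)"
    and root_cond: "d1 = d2 \<or> (d1 = cnj d2 \<and> d1 \<notin> \<real>)"
  shows "m\<^sup>2 + 4 * s * r \<le> 0"
proof -
  have e0: "- complex_of_real r = complex_of_real s * d1 * d2"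
    using roots[rule_format, of 0] by simp
  have e1: "complex_of_real s + complex_of_real m - complex_of_real r = complex_of_real s * (1 - d1) * (1 - d2)"
    using roots[rule_format, of 1] by simp
  obtain a b where d1: "d1 = Complex a b" by (cases d1)
  obtain c e where d2: "d2 = Complex c e" by (cases d2)
  have r0: "- r = s * (a*c - b*e)" and i0: "0 = s * (a*e + b*c)"
    using e0 unfolding d1 d2 by (auto simp: complex_eq_iff algebra_simps)
  have r1: "s + m - r = s * ((1-a)*(1-c) - b*e)" and i1: "0 = s * ((1-a)*(-e) + (-b)*(1-c))"
    using e1 unfolding d1 d2 by (auto simp: complex_eq_iff algebra_simps)
  have ms: "m = - s * (a + c)" using r0 r1 by (simp add: algebra_simps)
  show ?thesis
  proof (cases "d1 = d2")
    case True
    then have ac: "a = c" "b = e" using d1 d2 by auto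
    have "b = 0" using i0 i1 s unfolding ac by (simp add: algebra_simps) (smt (verit) mult_eq_0_iff)
    then have rr: "r = - (c * c * s)" and mm: "m = - (2 * c * s)" using ms r0 ac by (simp_all add: algebra_simps)
    show ?thesis unfolding rr mm by (simp add: power2_eq_square algebra_simps)
  next
    case False
    then have ac: "a = c" "b = - e" using root_cond d1 d2 by (auto simp: complex_eq_iff)
    have rr: "r = - (c * c * s + e * e * s)" and mm: "m = - (2 * c * s)" using ms r0 ac by (simp_all add: algebra_simps)
    have "m\<^sup>2 + 4 * s * r = - 4 * s\<^sup>2 * b\<^sup>2" unfolding rr mm ac by (simp add: power2_eq_square algebra_simps)
    also have "\<dots> \<le> 0" by simp
    finally show ?thesis .
  qed
qed


lemma ennreal_unbounded_top:
  fixes X :: ennreal and C :: real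
  assumes C: "C > 0" and le: "\<And>m::nat. m \<ge> 1 \<Longrightarrow> ennreal (C * (real m - 1)) \<le> X"
  shows "X = \<infinity>"
proof (rule ccontr)
  assume "X \<noteq> \<infinity>"
  then obtain y where y: "X = ennreal y" "y \<ge> 0" by (cases X rule: ennreal_cases) auto
  define m where "m = nat \<lceil>y / C\<rceil> + 2"
  have "ennreal (C * (real m - 1)) \<le> ennreal y" using le[of m] y m_def by auto
  then have "C * (real m - 1) \<le> y" using y by (simp add: ennreal_le_iff)
  moreover have "y / C + 1 \<le> real m - 1 + 0" unfolding m_def by linarith
  then have "y + C \<le> C * (real m - 1)" using C by (simp add: field_simps)
  ultimately show False using C by linarith
qed

lemma time_integral_infinite:
  fixes \<sigma> \<mu> r v :: real
  assumes sigma: "\<sigma> \<noteq> 0" and disc: "\<mu>\<^sup>2 + 2 * \<sigma>\<^sup>2 * r \<le> 0"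
  shows "(\<integral>\<^sup>+t. ennreal (indicator {0<..} t * exp (- r * t) * \<bar>1 / \<sigma>\<bar> *
            normal_density 0 (sqrt t) ((v - \<mu> * t) / \<sigma>)) \<partial>lborel) = \<infinity>"
proof -
  define C where "C = exp (v * \<mu> / \<sigma>\<^sup>2 - v\<^sup>2 / (2 * \<sigma>\<^sup>2)) * \<bar>1 / \<sigma>\<bar> / sqrt (2 * pi)"
  have C: "C > 0" using sigma unfolding C_def by auto
  have s2: "\<sigma>\<^sup>2 > 0" using sigma by simp
  have pt: "indicator {0<..} t * exp (- r * t) * \<bar>1 / \<sigma>\<bar> * normal_density 0 (sqrt t) ((v - \<mu> * t) / \<sigma>)
        \<ge> C / sqrt t" if t: "t \<ge> 1" for t
  proof -
    have ex: "- r * t - ((v - \<mu> * t) / \<sigma>)\<^sup>2 / (2 * t) = 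
       (v * \<mu> / \<sigma>\<^sup>2 - v\<^sup>2 / (2 * \<sigma>\<^sup>2 * t)) + (- t) * (\<mu>\<^sup>2 + 2 * \<sigma>\<^sup>2 * r) / (2 * \<sigma>\<^sup>2)"
      using t sigma by (simp add: field_simps power2_eq_square)
    have "v\<^sup>2 / (2 * \<sigma>\<^sup>2 * t) \<le> v\<^sup>2 / (2 * \<sigma>\<^sup>2)"
      using t s2 by (intro divide_left_mono) (auto intro: mult_pos_pos)
    moreover have "0 \<le> (- t) * (\<mu>\<^sup>2 + 2 * \<sigma>\<^sup>2 * r) / (2 * \<sigma>\<^sup>2)"
      using t disc s2 by (intro divide_nonneg_pos mult_nonpos_nonpos) auto
    ultimately have "v * \<mu> / \<sigma>\<^sup>2 - v\<^sup>2 / (2 * \<sigma>\<^sup>2) \<le> - r * t - ((v - \<mu> * t) / \<sigma>)\<^sup>2 / (2 * t)"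
      unfolding ex by linarith
    then have E: "exp (v * \<mu> / \<sigma>\<^sup>2 - v\<^sup>2 / (2 * \<sigma>\<^sup>2)) \<le> exp (- r * t) * exp (- ((v - \<mu> * t) / \<sigma>)\<^sup>2 / (2 * t))"
      by (simp add: exp_add[symmetric])
    have nd: "normal_density 0 (sqrt t) ((v - \<mu> * t) / \<sigma>) = 1 / sqrt (2 * pi) / sqrt t * exp (- ((v - \<mu> * t) / \<sigma>)\<^sup>2 / (2 * t))"
      using t by (simp add: normal_density_def real_sqrt_mult)
    have "C / sqrt t = exp (v * \<mu> / \<sigma>\<^sup>2 - v\<^sup>2 / (2 * \<sigma>\<^sup>2)) * (\<bar>1 / \<sigma>\<bar> / sqrt (2 * pi) / sqrt t)"
      unfolding C_def by simp
    also have "\<dots> \<le> (exp (- r * t) * exp (- ((v - \<mu> * t) / \<sigma>)\<^sup>2 / (2 * t))) * (\<bar>1 / \<sigma>\<bar> / sqrt (2 * pi) / sqrt t)"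
      using E t by (intro mult_right_mono) auto
    also have "\<dots> = indicator {0<..} t * exp (- r * t) * \<bar>1 / \<sigma>\<bar> * normal_density 0 (sqrt t) ((v - \<mu> * t) / \<sigma>)"
      using t unfolding nd by (simp add: indicator_def)
    finally show ?thesis .
  qed
  show ?thesis
  proof (rule ennreal_unbounded_top[OF C])
    fix m :: nat assume m: "m \<ge> 1"
    have "ennreal (C * (real m - 1)) \<le> ennreal (C / real m * ((real m)\<^sup>2 - 1))"
      using m C by (intro ennreal_leI) (simp add: field_simps power2_eq_square)
    also have "\<dots> = (\<integral>\<^sup>+t. ennreal (C / real m) * indicator {1..(real m)\<^sup>2} t \<partial>lborel)"
      using m C by (simp add: nn_integral_cmult ennreal_mult[symmetric])
    also have "\<dots> \<le> (\<integral>\<^sup>+t. ennreal (indicator {0<..} t * exp (- r * t) * \<bar>1 / \<sigma>\<bar> *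
            normal_density 0 (sqrt t) ((v - \<mu> * t) / \<sigma>)) \<partial>lborel)"
    proof (intro nn_integral_mono)
      fix t
      show "ennreal (C / real m) * indicator {1..(real m)\<^sup>2} t \<le> ennreal (indicator {0<..} t * exp (- r * t) * \<bar>1 / \<sigma>\<bar> *
            normal_density 0 (sqrt t) ((v - \<mu> * t) / \<sigma>))"
      proof (cases "t \<in> {1..(real m)\<^sup>2}")
        case True
        then have t1: "t \<ge> 1" "t \<le> (real m)\<^sup>2" by auto
        have "sqrt t \<le> real m" using t1 m by (simp add: real_sqrt_le_iff') 
        then have "C / real m \<le> C / sqrt t" using C t1 m by (intro divide_left_mono) (auto intro!: mult_pos_pos)
        also have "\<dots> \<le> indicator {0<..} t * exp (- r * t) * \<bar>1 / \<sigma>\<bar> * normal_density 0 (sqrt t) ((v - \<mu> * t) / \<sigma>)" by (rule pt[OF t1(1)])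
        finally show ?thesis using True by (simp add: ennreal_leI)
      qed auto
    qed
    finally show "ennreal (C * (real m - 1)) \<le> \<dots>" .
  qed
qed


lemma exp_subst_nonzero:
  fixes G :: "real \<Rightarrow> ennreal" and x :: real
  assumes G[measurable]: "G \<in> borel_measurable borel" and x: "x > 0"
    and nz: "(\<integral>\<^sup>+y. G y * indicator {0<..} y \<partial>lborel) \<noteq> 0"
  shows "(\<integral>\<^sup>+v. G (x * exp v) \<partial>lborel) \<noteq> 0"
proof
  assume Z: "(\<integral>\<^sup>+v. G (x * exp v) \<partial>lborel) = 0"
  have int0: "(\<integral>\<^sup>+y. G y * indicator {1 / (real n + 2) .. (real n + 2)} y \<partial>lborel) = 0" for n
  proof -
    define a where "a = ln (1 / (real n + 2) / x)"
    define b where "b = ln ((real n + 2) / x)"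
    have "1 / (real n + 2) < 1" by (simp add: field_simps)
    then have "1 / (real n + 2) < real n + 2" by linarith
    then have "1 / (real n + 2) / x < (real n + 2) / x" using x by (rule divide_strict_right_mono)
    then have ab: "a < b" unfolding a_def b_def using x
      by (subst ln_less_cancel_iff) auto
    have ga: "x * exp a = 1 / (real n + 2)" and gb: "x * exp b = (real n + 2)"
      unfolding a_def b_def using x by auto
    have S: "(\<integral>\<^sup>+y. G y * indicator {x * exp a .. x * exp b} y \<partial>lborel)
        = (\<integral>\<^sup>+v. G (x * exp v) * ennreal (x * exp v) * indicator {a..b} v \<partial>lborel)"
      by (rule nn_integral_substitution_aux[OF G _ _ _ _ ab])
         (use x in \<open>auto intro!: derivative_eq_intros continuous_intros\<close>)
    have "(\<integral>\<^sup>+y. G y * indicator {1 / (real n + 2) .. (real n + 2)} y \<partial>lborel)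
        = (\<integral>\<^sup>+v. G (x * exp v) * ennreal (x * exp v) * indicator {a..b} v \<partial>lborel)"
      using S unfolding ga gb .
    also have "\<dots> \<le> (\<integral>\<^sup>+v. ennreal ((real n + 2)) * G (x * exp v) \<partial>lborel)"
    proof (intro nn_integral_mono)
      fix v
      show "G (x * exp v) * ennreal (x * exp v) * indicator {a..b} v \<le> ennreal ((real n + 2)) * G (x * exp v)"
      proof (cases "v \<in> {a..b}")
        case True
        then have "x * exp v \<le> x * exp b" using x by auto
        then have "ennreal (x * exp v) \<le> ennreal ((real n + 2))" unfolding gb by (intro ennreal_leI)
        then have "G (x * exp v) * ennreal (x * exp v) \<le> G (x * exp v) * ennreal ((real n + 2))" by (rule mult_left_mono) auto
        moreover have "G (x * exp v) * ennreal (x * exp v) * indicator {a..b} v = G (x * exp v) * ennreal (x * exp v)" using True by simp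
        ultimately show ?thesis by (metis mult.commute)
      qed auto
    qed
    also have "\<dots> = 0" by (simp add: nn_integral_cmult Z)
    finally show ?thesis by simp
  qed
  have A: "AE y in lborel. G y * indicator {1 / (real n + 2) .. (real n + 2)} y = 0" for n
    using int0[of n] by (subst (asm) nn_integral_0_iff_AE) auto
  have "AE y in lborel. \<forall>n. G y * indicator {1 / (real n + 2) .. (real n + 2)} y = 0"
    using A by (intro AE_all_countable[THEN iffD2] allI)
  then have "AE y in lborel. G y * indicator {0<..} y = 0"
  proof (rule AE_mp, intro AE_I2 impI)
    fix y assume H: "\<forall>n. G y * indicator {1 / (real n + 2) .. (real n + 2)} y = 0"
    show "G y * indicator {0<..} y = 0"
    proof (cases "y > 0")
      case True
      obtain n1 :: nat where n1: "1 / y < real n1" using reals_Archimedean2 by blast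
      obtain n2 :: nat where n2: "y < real n2" using reals_Archimedean2 by blast
      define n where "n = max n1 n2"
      have "1 / (real n + 2) \<le> y"
      proof -
        have "1 / y < (real n + 2)" using n1 unfolding n_def by linarith
        then show ?thesis using True by (simp add: field_simps)
      qed
      moreover have "y \<le> (real n + 2)" using n2 unfolding n_def by linarith
      ultimately show ?thesis using H[rule_format, of n] by (simp add: indicator_def)
    qed simp
  qed
  then have "(\<integral>\<^sup>+y. G y * indicator {0<..} y \<partial>lborel) = 0"
    by (subst nn_integral_0_iff_AE) auto
  with nz show False by simp
qed


lemma W_joint_meas:
  fixes W :: "real \<Rightarrow> 'a \<Rightarrow> real"
  assumes meas: "\<forall>t\<ge>0. W t \<in> borel_measurable M"
    and cont: "\<forall>\<omega>\<in>space M. continuous_on {0..} (\<lambda>t. W t \<omega>)"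
  shows "(\<lambda>p. W (max (fst p) 0) (snd p)) \<in> borel_measurable (lborel \<Otimes>\<^sub>M M)"
proof (rule borel_measurable_LIMSEQ_metric)
  define s where "s n t = real (nat \<lceil>real (Suc n) * max t 0\<rceil>) / real (Suc n)" for n t
  show "(\<lambda>p. W (s n (fst p)) (snd p)) \<in> borel_measurable (lborel \<Otimes>\<^sub>M M)" for n
  proof -
    have "(\<lambda>p. (\<lambda>k p. W (real k / real (Suc n)) (snd p)) (nat \<lceil>real (Suc n) * max (fst p) 0\<rceil>) p)
        \<in> borel_measurable (lborel \<Otimes>\<^sub>M M)"
    proof (rule measurable_compose_countable[where f="\<lambda>k p. W (real k / real (Suc n)) (snd p)" and g="\<lambda>p. nat \<lceil>real (Suc n) * max (fst p) 0\<rceil>"])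
      fix k :: nat
      have [measurable]: "W (real k / real (Suc n)) \<in> borel_measurable M" using meas by auto
      show "(\<lambda>p. W (real k / real (Suc n)) (snd p)) \<in> borel_measurable (lborel \<Otimes>\<^sub>M M)"
        by measurable
    next
      show "(\<lambda>p. nat \<lceil>real (Suc n) * max (fst p) 0\<rceil>) \<in> measurable (lborel \<Otimes>\<^sub>M M) (count_space UNIV)"
        by measurable
    qed
    then show ?thesis unfolding s_def by simp
  qed
  fix p :: "real \<times> 'a" assume p: "p \<in> space (lborel \<Otimes>\<^sub>M M)"
  then have om: "snd p \<in> space M" by (auto simp: space_pair_measure)
  define t where "t = max (fst p) 0"
  have t0: "t \<ge> 0" unfolding t_def by simp
  have sb: "t \<le> s n (fst p) \<and> s n (fst p) \<le> t + inverse (real (Suc n))" for n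
  proof -
    have e: "s n (fst p) = real_of_int \<lceil>real (Suc n) * t\<rceil> / real (Suc n)"
      unfolding s_def t_def by simp
    have "real (Suc n) * t \<le> real_of_int \<lceil>real (Suc n) * t\<rceil>" by linarith
    moreover have "real_of_int \<lceil>real (Suc n) * t\<rceil> \<le> real (Suc n) * t + 1" by linarith
    ultimately have c1: "real (Suc n) * t \<le> real_of_int \<lceil>real (Suc n) * t\<rceil>"
        and c2: "real_of_int \<lceil>real (Suc n) * t\<rceil> \<le> real (Suc n) * t + 1" by auto
    have N: "real (Suc n) > 0" by simp
    have "t \<le> real_of_int \<lceil>real (Suc n) * t\<rceil> / real (Suc n)"
      using c1 N by (simp add: pos_le_divide_eq mult.commute)
    moreover have "real_of_int \<lceil>real (Suc n) * t\<rceil> / real (Suc n) \<le> (real (Suc n) * t + 1) / real (Suc n)"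
      using c2 N by (intro divide_right_mono) auto
    moreover have "(real (Suc n) * t + 1) / real (Suc n) = t + inverse (real (Suc n))"
      using N by (simp add: field_simps)
    ultimately show ?thesis unfolding e by simp
  qed
  have lim: "(\<lambda>n. s n (fst p)) \<longlonglongrightarrow> t"
    by (rule tendsto_sandwich[OF _ _ tendsto_const LIMSEQ_inverse_real_of_nat_add[of t]])
       (use sb in auto)
  have "(\<lambda>n. W (s n (fst p)) (snd p)) \<longlonglongrightarrow> W t (snd p)"
  proof -
    have "\<forall>\<^sub>F n in sequentially. s n (fst p) \<in> {0..}"
      using t0 sb by (intro always_eventually allI) (auto intro: order_trans)
    from continuous_on_tendsto_compose[OF cont[rule_format, OF om] lim _ this] t0
    show ?thesis by simp
  qed
  then show "(\<lambda>n. W (s n (fst p)) (snd p)) \<longlonglongrightarrow> W (max (fst p) 0) (snd p)"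
    unfolding t_def .
qed

theorem proposition1:
  fixes M :: "'a measure" and W :: "real \<Rightarrow> 'a \<Rightarrow> real"
    and r \<alpha> \<sigma> :: real and g :: "real \<Rightarrow> ennreal" and d1 d2 :: complex
  assumes BM: "brownian_motion M W"
    and sigma: "\<sigma> \<noteq> 0"
    and g_meas: "g \<in> borel_measurable (restrict_space borel {0<..})"
    and g_int: "(\<integral>\<^sup>+ y \<in> {0<..}. g y \<partial>lborel) \<noteq> 0"
    and roots: "\<forall>d::complex. complex_of_real (\<sigma>\<^sup>2 / 2) * d\<^sup>2 + complex_of_real (\<alpha> - \<sigma>\<^sup>2 / 2) * d
                   - complex_of_real r = complex_of_real (\<sigma>\<^sup>2 / 2) * (d - d1) * (d - d2)"
    and root_cond: "d1 = d2 \<or> (d1 = cnj d2 \<and> d1 \<notin> \<real>)"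
    and x: "x > 0"
  shows "(\<integral>\<^sup>+ \<omega>. (\<integral>\<^sup>+ t \<in> {0..}. ennreal (exp (- r * t)) * g (gbm \<alpha> \<sigma> x W t \<omega>) \<partial>lborel) \<partial>M) = \<infinity>"
proof -
  have ps: "prob_space M"
    and meas: "\<forall>t\<ge>0. W t \<in> borel_measurable M"
    and W0: "\<forall>\<omega>\<in>space M. W 0 \<omega> = 0"
    and cont: "\<forall>\<omega>\<in>space M. continuous_on {0..} (\<lambda>t. W t \<omega>)"
    and distr: "\<And>s t. 0 \<le> s \<Longrightarrow> s < t \<Longrightarrow>
        distributed M lborel (\<lambda>\<omega>. W t \<omega> - W s \<omega>) (normal_density 0 (sqrt (t - s)))"
    using BM unfolding brownian_motion_def by auto
  interpret prob_space M by (rule ps)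
  interpret P: pair_sigma_finite lborel M by unfold_locales
  have LL: "pair_sigma_finite lborel lborel" by unfold_locales
  define \<mu> where "\<mu> = \<alpha> - \<sigma>\<^sup>2 / 2"
  have s2: "\<sigma>\<^sup>2 / 2 > 0" using sigma by simp
  have disc: "\<mu>\<^sup>2 + 2 * \<sigma>\<^sup>2 * r \<le> 0"
    using disc_le[OF s2 roots root_cond] unfolding \<mu>_def by simp
  define G where "G y = g (if 0 < y then y else 1)" for y
  have Gm[measurable]: "G \<in> borel_measurable borel"
  proof -
    have "(\<lambda>y::real. if 0 < y then y else 1) \<in> measurable borel (restrict_space borel {0<..})"
      by (rule measurable_restrict_space2) auto
    from measurable_comp[OF this g_meas] show ?thesis unfolding G_def o_def .
  qed
  have Wj[measurable]: "(\<lambda>p. W (max (fst p) 0) (snd p)) \<in> borel_measurable (lborel \<Otimes>\<^sub>M M)"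
    by (rule W_joint_meas[OF meas cont])
  define H where "H t \<omega> = ennreal (indicator {0<..} t * exp (- r * t)) *
      G (x * exp (\<mu> * max t 0 + \<sigma> * W (max t 0) \<omega>))" for t \<omega>
  define k where "k t v = indicator {0<..} t * exp (- r * t) * \<bar>1 / \<sigma>\<bar> *
            normal_density 0 (sqrt t) ((v - \<mu> * t) / \<sigma>)" for t v
  define F where "F t v = ennreal (k t v) * G (x * exp v)" for t v
  have Hm: "case_prod H \<in> borel_measurable (lborel \<Otimes>\<^sub>M M)"
  proof -
    have "(\<lambda>p. H (fst p) (snd p)) \<in> borel_measurable (lborel \<Otimes>\<^sub>M M)"
      unfolding H_def by measurable
    then show ?thesis by (simp add: split_beta')
  qed
  have Fm: "case_prod F \<in> borel_measurable (lborel \<Otimes>\<^sub>M lborel)"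
  proof -
    have "(\<lambda>p. F (fst p) (snd p)) \<in> borel_measurable (lborel \<Otimes>\<^sub>M lborel)"
      unfolding F_def k_def normal_density_def by measurable
    then show ?thesis by (simp add: split_beta')
  qed
  have step1: "(\<integral>\<^sup>+ \<omega>. (\<integral>\<^sup>+ t. H t \<omega> \<partial>lborel) \<partial>M) \<le>
      (\<integral>\<^sup>+ \<omega>. (\<integral>\<^sup>+ t \<in> {0..}. ennreal (exp (- r * t)) * g (gbm \<alpha> \<sigma> x W t \<omega>) \<partial>lborel) \<partial>M)"
  proof (intro nn_integral_mono)
    fix \<omega> t
    show "H t \<omega> \<le> ennreal (exp (- r * t)) * g (gbm \<alpha> \<sigma> x W t \<omega>) * indicator {0..} t"
    proof (cases "t > 0")
      case True
      have "gbm \<alpha> \<sigma> x W t \<omega> = x * exp (\<mu> * t + \<sigma> * W t \<omega>)"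
        unfolding gbm_def \<mu>_def by (simp add: algebra_simps)
      then show ?thesis using True x unfolding H_def G_def by simp
    qed (simp add: H_def)
  qed
  have step3: "(\<integral>\<^sup>+ \<omega>. H t \<omega> \<partial>M) = (\<integral>\<^sup>+ v. F t v \<partial>lborel)" for t
  proof (cases "t > 0")
    case False
    then show ?thesis unfolding H_def F_def k_def by simp
  next
    case True
    have Wt[measurable]: "W t \<in> borel_measurable M" using meas True by simp
    have d: "distributed M lborel (\<lambda>\<omega>. W t \<omega> - W 0 \<omega>) (normal_density 0 (sqrt t))"
      using distr[of 0 t] True by simp
    have "(\<integral>\<^sup>+ \<omega>. H t \<omega> \<partial>M) = (\<integral>\<^sup>+ \<omega>. ennreal (exp (- r * t)) * G (x * exp (\<mu> * t + \<sigma> * W t \<omega>)) \<partial>M)"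
      unfolding H_def using True by simp
    also have "\<dots> = ennreal (exp (- r * t)) * (\<integral>\<^sup>+ \<omega>. G (x * exp (\<mu> * t + \<sigma> * W t \<omega>)) \<partial>M)"
      by (rule nn_integral_cmult) measurable
    also have "(\<integral>\<^sup>+ \<omega>. G (x * exp (\<mu> * t + \<sigma> * W t \<omega>)) \<partial>M)
        = (\<integral>\<^sup>+ \<omega>. G (x * exp (\<mu> * t + \<sigma> * (W t \<omega> - W 0 \<omega>))) \<partial>M)"
      using W0 by (intro nn_integral_cong) simp
    also have "\<dots> = (\<integral>\<^sup>+ w. ennreal (normal_density 0 (sqrt t) w) * G (x * exp (\<mu> * t + \<sigma> * w)) \<partial>lborel)"
      by (rule distributed_nn_integral[OF d, symmetric]) measurable
    also have "\<dots> = ennreal \<bar>1 / \<sigma>\<bar> * (\<integral>\<^sup>+ v. ennreal (normal_density 0 (sqrt t) (- \<mu> * t / \<sigma> + 1 / \<sigma> * v)) *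
          G (x * exp (\<mu> * t + \<sigma> * (- \<mu> * t / \<sigma> + 1 / \<sigma> * v))) \<partial>lborel)"
      using sigma by (subst nn_integral_real_affine[where t="- \<mu> * t / \<sigma>" and c="1 / \<sigma>"])
        (auto simp: normal_density_def)
    also have "(\<integral>\<^sup>+ v. ennreal (normal_density 0 (sqrt t) (- \<mu> * t / \<sigma> + 1 / \<sigma> * v)) *
          G (x * exp (\<mu> * t + \<sigma> * (- \<mu> * t / \<sigma> + 1 / \<sigma> * v))) \<partial>lborel)
        = (\<integral>\<^sup>+ v. ennreal (normal_density 0 (sqrt t) ((v - \<mu> * t) / \<sigma>)) * G (x * exp v) \<partial>lborel)"
    proof (intro nn_integral_cong)
      fix v
      have "- \<mu> * t / \<sigma> + 1 / \<sigma> * v = (v - \<mu> * t) / \<sigma>" by (simp add: diff_divide_distrib)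
      moreover have "\<mu> * t + \<sigma> * (- \<mu> * t / \<sigma> + 1 / \<sigma> * v) = v" using sigma by (simp add: field_simps)
      ultimately show "ennreal (normal_density 0 (sqrt t) (- \<mu> * t / \<sigma> + 1 / \<sigma> * v)) *
          G (x * exp (\<mu> * t + \<sigma> * (- \<mu> * t / \<sigma> + 1 / \<sigma> * v))) =
          ennreal (normal_density 0 (sqrt t) ((v - \<mu> * t) / \<sigma>)) * G (x * exp v)" by simp
    qed
    also have "ennreal (exp (- r * t)) * (ennreal \<bar>1 / \<sigma>\<bar> *
        (\<integral>\<^sup>+ v. ennreal (normal_density 0 (sqrt t) ((v - \<mu> * t) / \<sigma>)) * G (x * exp v) \<partial>lborel))
      = (\<integral>\<^sup>+ v. ennreal (exp (- r * t)) * (ennreal \<bar>1 / \<sigma>\<bar> *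
          (ennreal (normal_density 0 (sqrt t) ((v - \<mu> * t) / \<sigma>)) * G (x * exp v))) \<partial>lborel)"
      by (subst nn_integral_cmult, measurable, subst nn_integral_cmult, measurable)
    also have "\<dots> = (\<integral>\<^sup>+ v. F t v \<partial>lborel)"
    proof (intro nn_integral_cong)
      fix v
      have "normal_density 0 (sqrt t) ((v - \<mu> * t) / \<sigma>) \<ge> 0" by (simp add: normal_density_def)
      then show "ennreal (exp (- r * t)) * (ennreal \<bar>1 / \<sigma>\<bar> *
          (ennreal (normal_density 0 (sqrt t) ((v - \<mu> * t) / \<sigma>)) * G (x * exp v))) = F t v"
      proof -
        let ?a = "exp (- r * t)" and ?b = "\<bar>1 / \<sigma>\<bar>" and ?c = "normal_density 0 (sqrt t) ((v - \<mu> * t) / \<sigma>)"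
        have "ennreal (?a * ?b * ?c) = ennreal (?a * ?b) * ennreal ?c"
          using \<open>?c \<ge> 0\<close> by (intro ennreal_mult) auto
        also have "ennreal (?a * ?b) = ennreal ?a * ennreal ?b" by (intro ennreal_mult) auto
        finally have e: "ennreal (?a * ?b * ?c) = ennreal ?a * (ennreal ?b * ennreal ?c)" by (simp add: mult.assoc)
        have kk: "k t v = ?a * ?b * ?c" unfolding k_def using True by simp
        show ?thesis unfolding F_def kk e by (simp only: mult.assoc)
      qed
    qed
    finally show ?thesis .
  qed
  have "(\<integral>\<^sup>+ \<omega>. (\<integral>\<^sup>+ t. H t \<omega> \<partial>lborel) \<partial>M) = (\<integral>\<^sup>+ t. (\<integral>\<^sup>+ \<omega>. H t \<omega> \<partial>M) \<partial>lborel)"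
    by (rule P.Fubini'[OF Hm])
  also have "\<dots> = (\<integral>\<^sup>+ t. (\<integral>\<^sup>+ v. F t v \<partial>lborel) \<partial>lborel)"
    using step3 by simp
  also have "\<dots> = (\<integral>\<^sup>+ v. (\<integral>\<^sup>+ t. F t v \<partial>lborel) \<partial>lborel)"
    by (rule pair_sigma_finite.Fubini'[OF LL Fm, symmetric])
  also have "\<dots> = (\<integral>\<^sup>+ v. G (x * exp v) * \<infinity> \<partial>lborel)"
  proof (intro nn_integral_cong)
    fix v
    have "(\<integral>\<^sup>+ t. F t v \<partial>lborel) = (\<integral>\<^sup>+ t. ennreal (k t v) \<partial>lborel) * G (x * exp v)"
      unfolding F_def k_def normal_density_def by (rule nn_integral_multc) measurable
    also have "(\<integral>\<^sup>+ t. ennreal (k t v) \<partial>lborel) = \<infinity>"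
      unfolding k_def by (rule time_integral_infinite[OF sigma disc])
    finally show "(\<integral>\<^sup>+ t. F t v \<partial>lborel) = G (x * exp v) * \<infinity>" by (simp add: mult.commute)
  qed
  also have "\<dots> = (\<integral>\<^sup>+ v. G (x * exp v) \<partial>lborel) * \<infinity>"
    by (rule nn_integral_multc) measurable
  also have "\<dots> = \<infinity>"
  proof -
    have "(\<integral>\<^sup>+y. G y * indicator {0<..} y \<partial>lborel) = (\<integral>\<^sup>+ y \<in> {0<..}. g y \<partial>lborel)"
      by (intro nn_integral_cong) (simp add: G_def indicator_def)
    then have "(\<integral>\<^sup>+ v. G (x * exp v) \<partial>lborel) \<noteq> 0"
      using exp_subst_nonzero[OF Gm x] g_int by simp
    then show ?thesis by simp
  qed
  finally have "\<infinity> \<le> (\<integral>\<^sup>+ \<omega>. (\<integral>\<^sup>+ t \<in> {0..}. ennreal (exp (- r * t)) * g (gbm \<alpha> \<sigma> x W t \<omega>) \<partial>lborel) \<partial>M)"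
    using step1 by simp
  then show ?thesis by (simp add: top_unique)
qed

end
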